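(* Let $f:\mathbb{R}^{n_0}\to\mathbb{R}^{n_m}$ be an $m$-layer ReLU network with weights $\mathbf{W}^{(k)}$ and biases $\bm{b}^{(k)}$, let $\bm{x}_0\in\mathbb{R}^{n_0}$, $p\in[1,\infty]$, $\epsilon>0$, and let $\bm{l}^{(k)},\bm{u}^{(k)}$, $k\in[m-1]$, be valid pre-ReLU activation bounds on $B_p(\bm{x}_0,\epsilon)$ as described below. For each $j\in[n_m]$ define $$\gamma^L_j=\mu^-_j+\nu_j-\epsilon\|\mathbf{A}^{(0)}_{j,:}\|_q,\qquad \gamma^U_j=\mu^+_j+\nu_j+\epsilon\|\mathbf{A}^{(0)}_{j,:}\|_q,$$ where $1/p+1/q=1$, $\mu^+_j=-\sum_{k=1}^{m-1}\mathbf{A}^{(k)}_{j,:}\mathbf{T}^{(k)}_{:,j}$, $\mu^-_j=-\sum_{k=1}^{m-1}\mathbf{A}^{(k)}_{j,:}\mathbf{H}^{(k)}_{:,j}$ and $\nu_j=\mathbf{A}^{(0)}_{j,:}\bm{x}_0+\bm{b}^{(m)}_j+\sum_{k=1}^{m-1}\mathbf{A}^{(k)}_{j,:}\bm{b}^{(k)}$. Then for every $j\in[n_m]$, $\gamma^L_j\le f_j(\bm{x})\le\gamma^U_j$ for all $\bm{x}\in B_p(\bm{x}_0,\epsilon)$.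
   Context: Network: $\phi_0(\bm{x})=\bm{x}$; for $k\in[m-1]$, $\phi_k(\bm{x})=\sigma(\mathbf{W}^{(k)}\phi_{k-1}(\bm{x})+\bm{b}^{(k)})$, $\mathbf{W}^{(k)}\in\mathbb{R}^{n_k\times n_{k-1}}$, $\bm{b}^{(k)}\in\mathbb{R}^{n_k}$, $\sigma(\bm{y})=\max(\bm{y},\bm{0})$ elementwise; $f(\bm{x})=\mathbf{W}^{(m)}\phi_{m-1}(\bm{x})+\bm{b}^{(m)}$. $B_p(\bm{x}_0,\epsilon)=\{\bm{x}:\|\bm{x}-\bm{x}_0\|_p\le\epsilon\}$. Standing assumption: for each $k\in[m-1]$, $r\in[n_k]$, $\bm{l}^{(k)}_r\le\bm{u}^{(k)}_r$ and $\bm{l}^{(k)}_r\le\mathbf{W}^{(k)}_{r,:}\phi_{k-1}(\bm{x})+\bm{b}^{(k)}_r\le\bm{u}^{(k)}_r$ for all $\bm{x}\in B_p(\bm{x}_0,\epsilon)$. Index sets: $\mathcal{I}^+_k=\{r:\bm{u}^{(k)}_r\ge\bm{l}^{(k)}_r\ge0\}$, $\mathcal{I}^-_k=\{r:\bm{l}^{(k)}_r\le\bm{u}^{(k)}_r\le0\}$, $\mathcal{I}_k=\{r:\bm{l}^{(k)}_r<0<\bm{u}^{(k)}_r\}$. $\mathbf{D}^{(0)}=I_{n_0}$; for $k\in[m-1]$, $\mathbf{D}^{(k)}$ is diagonal $n_k\times n_k$ with $\mathbf{D}^{(k)}_{r,r}=\frac{\bm{u}^{(k)}_r}{\bm{u}^{(k)}_r-\bm{l}^{(k)}_r}$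 if $r\in\mathcal{I}_k$, $1$ if $r\in\mathcal{I}^+_k$, $0$ if $r\in\mathcal{I}^-_k$. $\mathbf{A}^{(m-1)}=\mathbf{W}^{(m)}\mathbf{D}^{(m-1)}$ and for $k=m-1,\dots,1$, $\mathbf{A}^{(k-1)}=\mathbf{A}^{(k)}\mathbf{W}^{(k)}\mathbf{D}^{(k-1)}$. For $k\in[m-1]$, $\mathbf{T}^{(k)},\mathbf{H}^{(k)}\in\mathbb{R}^{n_k\times n_m}$ with $\mathbf{T}^{(k)}_{r,j}=\bm{l}^{(k)}_r$ if $r\in\mathcal{I}_k$ and $\mathbf{A}^{(k)}_{j,r}>0$ (else $0$), and $\mathbf{H}^{(k)}_{r,j}=\bm{l}^{(k)}_r$ if $r\in\mathcal{I}_k$ and $\mathbf{A}^{(k)}_{j,r}<0$ (else $0$). *)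

theory Defs
  imports "HOL-Analysis.Analysis"
begin

text \<open>Conventions: vectors are functions nat \<Rightarrow> real, of which only the first n entries
  matter; matrices are nat \<Rightarrow> nat \<Rightarrow> real (row index first). Layer widths are n k.
  Indices are 0-based: the paper's index set [n] becomes {..<n}. Layers k are 1..m as in the paper.\<close>

definition pnorm :: "nat \<Rightarrow> ereal \<Rightarrow> (nat \<Rightarrow> real) \<Rightarrow> real" where
  "pnorm d p x =
     (if p = \<infinity> then Max (insert 0 ((\<lambda>i. \<bar>x i\<bar>) ` {..<d}))
      else (\<Sum>i<d. \<bar>x i\<bar> powr real_of_ereal p) powr (1 / real_of_ereal p))"

definition dual_exp :: "ereal \<Rightarrow> ereal" where
  "dual_exp p = (if p = 1 then \<infinity> else if p = \<infinity> then 1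
                 else ereal (real_of_ereal p / (real_of_ereal p - 1)))"

fun relu_phi :: "(nat \<Rightarrow> nat) \<Rightarrow> (nat \<Rightarrow> nat \<Rightarrow> nat \<Rightarrow> real) \<Rightarrow> (nat \<Rightarrow> nat \<Rightarrow> real)
                 \<Rightarrow> nat \<Rightarrow> (nat \<Rightarrow> real) \<Rightarrow> (nat \<Rightarrow> real)" where
  "relu_phi n W b 0 x = x"
| "relu_phi n W b (Suc k) x =
     (\<lambda>r. max 0 ((\<Sum>i<n k. W (Suc k) r i * relu_phi n W b k x i) + b (Suc k) r))"

definition preact :: "(nat \<Rightarrow> nat) \<Rightarrow> (nat \<Rightarrow> nat \<Rightarrow> nat \<Rightarrow> real) \<Rightarrow> (nat \<Rightarrow> nat \<Rightarrow> real)
                 \<Rightarrow> nat \<Rightarrow> (nat \<Rightarrow> real) \<Rightarrow> (nat \<Rightarrow> real)" where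
  "preact n W b k x = (\<lambda>r. (\<Sum>i<n (k - 1). W k r i * relu_phi n W b (k - 1) x i) + b k r)"

definition net :: "nat \<Rightarrow> (nat \<Rightarrow> nat) \<Rightarrow> (nat \<Rightarrow> nat \<Rightarrow> nat \<Rightarrow> real) \<Rightarrow> (nat \<Rightarrow> nat \<Rightarrow> real)
                 \<Rightarrow> (nat \<Rightarrow> real) \<Rightarrow> (nat \<Rightarrow> real)" where
  "net m n W b x = preact n W b m x"

definition Ddiag :: "(nat \<Rightarrow> nat \<Rightarrow> real) \<Rightarrow> (nat \<Rightarrow> nat \<Rightarrow> real) \<Rightarrow> nat \<Rightarrow> nat \<Rightarrow> real" where
  "Ddiag l u k r =
     (if k = 0 then 1
      else if l k r < 0 \<and> 0 < u k r then u k r / (u k r - l k r)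
      else if 0 \<le> l k r then 1
      else 0)"

fun Arev :: "nat \<Rightarrow> (nat \<Rightarrow> nat) \<Rightarrow> (nat \<Rightarrow> nat \<Rightarrow> nat \<Rightarrow> real) \<Rightarrow> (nat \<Rightarrow> nat \<Rightarrow> real)
             \<Rightarrow> (nat \<Rightarrow> nat \<Rightarrow> real) \<Rightarrow> nat \<Rightarrow> nat \<Rightarrow> nat \<Rightarrow> real" where
  "Arev m n W l u 0 = (\<lambda>j r. W m j r * Ddiag l u (m - 1) r)"
| "Arev m n W l u (Suc t) =
     (let k = m - 1 - t in
      (\<lambda>j r. (\<Sum>i<n k. Arev m n W l u t j i * W k i r) * Ddiag l u (k - 1) r))"

definition Amat :: "nat \<Rightarrow> (nat \<Rightarrow> nat) \<Rightarrow> (nat \<Rightarrow> nat \<Rightarrow> nat \<Rightarrow> real) \<Rightarrow> (nat \<Rightarrow> nat \<Rightarrow> real)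
             \<Rightarrow> (nat \<Rightarrow> nat \<Rightarrow> real) \<Rightarrow> nat \<Rightarrow> nat \<Rightarrow> nat \<Rightarrow> real" where
  "Amat m n W l u k = Arev m n W l u (m - 1 - k)"

definition Tmat :: "nat \<Rightarrow> (nat \<Rightarrow> nat) \<Rightarrow> (nat \<Rightarrow> nat \<Rightarrow> nat \<Rightarrow> real) \<Rightarrow> (nat \<Rightarrow> nat \<Rightarrow> real)
             \<Rightarrow> (nat \<Rightarrow> nat \<Rightarrow> real) \<Rightarrow> nat \<Rightarrow> nat \<Rightarrow> nat \<Rightarrow> real" where
  "Tmat m n W l u k r j =
     (if l k r < 0 \<and> 0 < u k r \<and> Amat m n W l u k j r > 0 then l k r else 0)"

definition Hmat :: "nat \<Rightarrow> (nat \<Rightarrow> nat) \<Rightarrow> (nat \<Rightarrow> nat \<Rightarrow> nat \<Rightarrow> real) \<Rightarrow> (nat \<Rightarrow> nat \<Rightarrow> real)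
             \<Rightarrow> (nat \<Rightarrow> nat \<Rightarrow> real) \<Rightarrow> nat \<Rightarrow> nat \<Rightarrow> nat \<Rightarrow> real" where
  "Hmat m n W l u k r j =
     (if l k r < 0 \<and> 0 < u k r \<and> Amat m n W l u k j r < 0 then l k r else 0)"

end

theory Submission
  imports Defs
begin

lemma holder_real:
  fixes P Q :: real and a z :: "nat \<Rightarrow> real"
  assumes PQ: "P > 1" "Q > 1" "1/P + 1/Q = 1"
  shows "(\<Sum>i<d. \<bar>a i\<bar> * \<bar>z i\<bar>) \<le> (\<Sum>i<d. \<bar>a i\<bar> powr Q) powr (1/Q) * (\<Sum>i<d. \<bar>z i\<bar> powr P) powr (1/P)"
proof -
  define SA where "SA = (\<Sum>i<d. \<bar>a i\<bar> powr Q)"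
  define SZ where "SZ = (\<Sum>i<d. \<bar>z i\<bar> powr P)"
  have SA0: "SA \<ge> 0" "SZ \<ge> 0" unfolding SA_def SZ_def by (auto intro: sum_nonneg)
  show ?thesis
  proof (cases "SA = 0 \<or> SZ = 0")
    case True
    then have "\<forall>i<d. a i = 0 \<or> z i = 0"
      unfolding SA_def SZ_def by (subst (asm) sum_nonneg_eq_0_iff; auto)+
    then have "(\<Sum>i<d. \<bar>a i\<bar> * \<bar>z i\<bar>) = 0" by (intro sum.neutral) auto
    then show ?thesis by (simp add: SA_def[symmetric] SZ_def[symmetric])
  next
    case False
    then have pos: "SA > 0" "SZ > 0" using SA0 by auto
    define A where "A = SA powr (1/Q)"
    define Z where "Z = SZ powr (1/P)"
    have AZ: "A > 0" "Z > 0" using pos by (auto simp: A_def Z_def)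
    have Aq: "A powr Q = SA" using pos PQ by (simp add: A_def powr_powr)
    have Zp: "Z powr P = SZ" using pos PQ by (simp add: Z_def powr_powr)
    have "(\<Sum>i<d. \<bar>a i\<bar> * \<bar>z i\<bar>) / (A * Z) = (\<Sum>i<d. (\<bar>a i\<bar> / A) * (\<bar>z i\<bar> / Z))"
      by (simp add: sum_divide_distrib)
    also have "\<dots> \<le> (\<Sum>i<d. (\<bar>a i\<bar> / A) powr Q / Q + (\<bar>z i\<bar> / Z) powr P / P)"
      apply (rule sum_mono)
      subgoal for i
        using Youngs_inequality[of Q P "\<bar>a i\<bar> / A" "\<bar>z i\<bar> / Z"] PQ AZ by (simp add: add.commute)
      done
    also have "\<dots> = (\<Sum>i<d. \<bar>a i\<bar> powr Q) / SA / Q + (\<Sum>i<d. \<bar>z i\<bar> powr P) / SZ / P"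
      using AZ by (simp add: sum.distrib powr_divide Aq Zp sum_divide_distrib)
    also have "\<dots> = 1" using pos PQ by (simp add: SA_def[symmetric] SZ_def[symmetric])
    finally have "(\<Sum>i<d. \<bar>a i\<bar> * \<bar>z i\<bar>) \<le> A * Z"
      using AZ by (simp add: divide_le_eq)
    then show ?thesis by (simp add: A_def Z_def SA_def SZ_def)
  qed
qed

lemma pnorm_nonneg: "pnorm d p x \<ge> 0"
  unfolding pnorm_def by auto

lemma pnorm_inf_ge: "i < d \<Longrightarrow> \<bar>x i\<bar> \<le> pnorm d \<infinity> x"
  unfolding pnorm_def by (auto intro: Max_ge)

lemma pnorm_one: "pnorm d 1 x = (\<Sum>i<d. \<bar>x i\<bar>)"
  unfolding pnorm_def by (simp add: sum_nonneg)

lemma holder_pnorm: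
  assumes p: "1 \<le> p"
  shows "(\<Sum>i<d. \<bar>a i\<bar> * \<bar>z i\<bar>) \<le> pnorm d (dual_exp p) a * pnorm d p z"
proof -
  consider "p = \<infinity>" | "p = 1" | P where "p = ereal P" "P > 1"
    using p by (cases p) (auto simp: one_ereal_def, fastforce)
  then show ?thesis
  proof cases
    case 1
    then have "(\<Sum>i<d. \<bar>a i\<bar> * \<bar>z i\<bar>) \<le> (\<Sum>i<d. \<bar>a i\<bar> * pnorm d \<infinity> z)"
      by (intro sum_mono mult_left_mono pnorm_inf_ge) auto
    then show ?thesis using 1 by (simp add: dual_exp_def pnorm_one sum_distrib_right)
  next
    case 2
    then have "(\<Sum>i<d. \<bar>a i\<bar> * \<bar>z i\<bar>) \<le> (\<Sum>i<d. pnorm d \<infinity> a * \<bar>z i\<bar>)"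
      by (intro sum_mono mult_right_mono pnorm_inf_ge) auto
    then show ?thesis using 2 by (simp add: dual_exp_def pnorm_one sum_distrib_left)
  next
    case 3
    define Q where "Q = P / (P - 1)"
    have Q: "Q > 1" "1/P + 1/Q = 1" using 3 by (auto simp: Q_def field_simps)
    have dq: "dual_exp (ereal P) = ereal Q" using 3 by (simp add: dual_exp_def Q_def)
    show ?thesis using holder_real[of P Q a z d] 3 Q
      by (simp add: dq pnorm_def mult.commute)
  qed
qed

lemma neuron_upper:
  fixes l u y L :: real
  assumes "l \<le> y" "y \<le> u"
  shows "L * max 0 y \<le> L * (if l < 0 \<and> 0 < u then u / (u - l) else if 0 \<le> l then 1 else 0) *
     (y - (if l < 0 \<and> 0 < u \<and> L * (if l < 0 \<and> 0 < u then u / (u - l) else if 0 \<le> l then 1 else 0) > 0 then l else 0))"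
proof (cases "l < 0 \<and> 0 < u")
  case True
  define d where "d = u / (u - l)"
  have d: "0 < d" "d \<le> 1" using True by (auto simp: d_def field_simps)
  have up: "max 0 y \<le> d * (y - l)"
  proof -
    have "u * (y - l) - (u - l) * y = l * (y - u)" by (simp add: algebra_simps)
    also have "\<dots> \<ge> 0" using True assms by (intro mult_nonpos_nonpos) auto
    finally have "(u - l) * y \<le> u * (y - l)" by simp
    then have "y \<le> d * (y - l)" using True by (simp add: d_def field_simps)
    moreover have "0 \<le> d * (y - l)" using d assms by simp
    ultimately show ?thesis by simp
  qed
  have lo: "d * y \<le> max 0 y"
  proof (cases "y \<ge> 0")
    case True then show ?thesis using d mult_left_le_one_le[of y d] by simp
  next
    case False then show ?thesis using d by (simp add: mult_nonneg_nonpos)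
  qed
  have "L * max 0 y \<le> L * d * (y - (if L * d > 0 then l else 0))"
  proof (cases "L > 0")
    case True then show ?thesis using up d by (simp add: mult_left_mono mult.assoc)
  next
    case False then show ?thesis using lo d
      by (auto simp: mult.assoc zero_less_mult_iff intro!: mult_left_mono_neg)
  qed
  then show ?thesis using True by (simp add: d_def)
qed (use assms in auto)

lemma neuron_lower:
  fixes l u y L :: real
  assumes "l \<le> y" "y \<le> u"
  shows "L * (if l < 0 \<and> 0 < u then u / (u - l) else if 0 \<le> l then 1 else 0) *
     (y - (if l < 0 \<and> 0 < u \<and> L * (if l < 0 \<and> 0 < u then u / (u - l) else if 0 \<le> l then 1 else 0) < 0 then l else 0))
     \<le> L * max 0 y"
  using neuron_upper[OF assms, of "-L"] by (simp add: algebra_simps)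

lemma Amat_last: "Amat m n W l u (m-1) j r = W m j r * Ddiag l u (m-1) r"
  by (simp add: Amat_def)

lemma Amat_step:
  assumes "1 \<le> k" "k \<le> m - 1"
  shows "Amat m n W l u (k-1) j r = (\<Sum>i<n k. Amat m n W l u k j i * W k i r) * Ddiag l u (k-1) r"
proof -
  have e: "m - 1 - (k - 1) = Suc (m - 1 - k)" using assms by simp
  have e2: "m - 1 - (m - 1 - k) = k" using assms by simp
  have e3: "m - Suc (m - Suc k) = k" "m - Suc (Suc (m - Suc k)) = k - Suc 0" using assms by auto
  show ?thesis unfolding Amat_def e by (simp add: Let_def e2 e3)
qed

lemma relu_phi_preact: "1 \<le> k \<Longrightarrow> relu_phi n W b k x r = max 0 (preact n W b k x r)"
  by (cases k) (auto simp: preact_def)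

lemma Ddiag_pos: "1 \<le> k \<Longrightarrow> Ddiag l u k r =
   (if l k r < 0 \<and> 0 < u k r then u k r / (u k r - l k r) else if 0 \<le> l k r then 1 else 0)"
  by (simp add: Ddiag_def)

theorem corollary3p7:
  fixes m :: nat and n :: "nat \<Rightarrow> nat"
    and W :: "nat \<Rightarrow> nat \<Rightarrow> nat \<Rightarrow> real" and b :: "nat \<Rightarrow> nat \<Rightarrow> real"
    and l u :: "nat \<Rightarrow> nat \<Rightarrow> real"
    and x0 :: "nat \<Rightarrow> real" and p :: ereal and \<epsilon> :: real
  assumes m: "1 \<le> m"
    and p: "1 \<le> p"
    and eps: "0 < \<epsilon>"
    and lu: "\<And>k r. k \<in> {1..m-1} \<Longrightarrow> r < n k \<Longrightarrow> l k r \<le> u k r"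
    and bounds: "\<And>k r x. k \<in> {1..m-1} \<Longrightarrow> r < n k \<Longrightarrow> pnorm (n 0) p (\<lambda>i. x i - x0 i) \<le> \<epsilon> \<Longrightarrow>
                   l k r \<le> preact n W b k x r \<and> preact n W b k x r \<le> u k r"
  shows "\<forall>j < n m. \<forall>x. pnorm (n 0) p (\<lambda>i. x i - x0 i) \<le> \<epsilon> \<longrightarrow>
     (let A = Amat m n W l u;
          q = dual_exp p;
          muP = - (\<Sum>k\<in>{1..m-1}. \<Sum>r<n k. A k j r * Tmat m n W l u k r j);
          muM = - (\<Sum>k\<in>{1..m-1}. \<Sum>r<n k. A k j r * Hmat m n W l u k r j);
          nu = (\<Sum>i<n 0. A 0 j i * x0 i) + b m j
               + (\<Sum>k\<in>{1..m-1}. \<Sum>r<n k. A k j r * b k r);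
          gL = muM + nu - \<epsilon> * pnorm (n 0) q (A 0 j);
          gU = muP + nu + \<epsilon> * pnorm (n 0) q (A 0 j)
      in gL \<le> net m n W b x j \<and> net m n W b x j \<le> gU)"
proof (intro allI impI)
  fix j x assume j: "j < n m" and xb: "pnorm (n 0) p (\<lambda>i. x i - x0 i) \<le> \<epsilon>"
  define A where "A = Amat m n W l u"
  define Lam where "Lam k i = (if k = m-1 then W m j i else (\<Sum>r<n (k+1). A (k+1) j r * W (k+1) r i))" for k i
  define phi where "phi k = relu_phi n W b k x" for k
  have AL: "A k j i = Lam k i * Ddiag l u k i" if "k \<le> m-1" for k i
  proof (cases "k = m-1")
    case True then show ?thesis using Amat_last[of m n W l u j i] by (simp add: A_def Lam_def)
  next
    case False
    then have "A ((k+1)-1) j i = (\<Sum>r<n (k+1). A (k+1) j r * W (k+1) r i) * Ddiag l u ((k+1)-1) i"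
      unfolding A_def using that by (intro Amat_step) auto
    then show ?thesis using False by (simp add: Lam_def)
  qed
  have layerU: "(\<Sum>r<n k. Lam k r * phi k r) \<le> (\<Sum>i<n (k-1). Lam (k-1) i * phi (k-1) i)
      + (\<Sum>r<n k. A k j r * (b k r - Tmat m n W l u k r j))"
   and layerL: "(\<Sum>i<n (k-1). Lam (k-1) i * phi (k-1) i)
      + (\<Sum>r<n k. A k j r * (b k r - Hmat m n W l u k r j)) \<le> (\<Sum>r<n k. Lam k r * phi k r)"
    if k: "k \<in> {1..m-1}" for k
  proof -
    have k1: "1 \<le> k" "k \<le> m - 1" using k by auto
    have sw: "(\<Sum>r<n k. A k j r * (preact n W b k x r - Z r)) =
       (\<Sum>i<n (k-1). Lam (k-1) i * phi (k-1) i) + (\<Sum>r<n k. A k j r * (b k r - Z r))" for Z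
    proof -
      have L: "Lam (k - Suc 0) i = (\<Sum>r<n k. A k j r * W k r i)" for i
        using k1 by (simp add: Lam_def)
      have "(\<Sum>r<n k. A k j r * (preact n W b k x r - Z r)) =
         (\<Sum>r<n k. \<Sum>i<n (k-1). A k j r * W k r i * phi (k-1) i) + (\<Sum>r<n k. A k j r * (b k r - Z r))"
        by (simp add: preact_def phi_def algebra_simps sum.distrib sum_distrib_left sum_subtractf)
      also have "(\<Sum>r<n k. \<Sum>i<n (k-1). A k j r * W k r i * phi (k-1) i) = (\<Sum>i<n (k-1). Lam (k-1) i * phi (k-1) i)"
        by (subst sum.swap) (simp add: L sum_distrib_right)
      finally show ?thesis .
    qed
    have "(\<Sum>r<n k. Lam k r * phi k r) \<le> (\<Sum>r<n k. A k j r * (preact n W b k x r - Tmat m n W l u k r j))"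
    proof (rule sum_mono)
      fix r assume r: "r \<in> {..<n k}"
      have bd: "l k r \<le> preact n W b k x r" "preact n W b k x r \<le> u k r" using bounds[OF k _ xb] r by auto
      show "Lam k r * phi k r \<le> A k j r * (preact n W b k x r - Tmat m n W l u k r j)"
        using neuron_upper[OF bd, of "Lam k r"] k1
        by (simp add: phi_def relu_phi_preact AL Ddiag_pos Tmat_def A_def[symmetric])
    qed
    then show "(\<Sum>r<n k. Lam k r * phi k r) \<le> (\<Sum>i<n (k-1). Lam (k-1) i * phi (k-1) i)
      + (\<Sum>r<n k. A k j r * (b k r - Tmat m n W l u k r j))" by (simp add: sw)
    have "(\<Sum>r<n k. A k j r * (preact n W b k x r - Hmat m n W l u k r j)) \<le> (\<Sum>r<n k. Lam k r * phi k r)"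
    proof (rule sum_mono)
      fix r assume r: "r \<in> {..<n k}"
      have bd: "l k r \<le> preact n W b k x r" "preact n W b k x r \<le> u k r" using bounds[OF k _ xb] r by auto
      show "A k j r * (preact n W b k x r - Hmat m n W l u k r j) \<le> Lam k r * phi k r"
        using neuron_lower[OF bd, of "Lam k r"] k1
        by (simp add: phi_def relu_phi_preact AL Ddiag_pos Hmat_def A_def[symmetric])
    qed
    then show "(\<Sum>i<n (k-1). Lam (k-1) i * phi (k-1) i)
      + (\<Sum>r<n k. A k j r * (b k r - Hmat m n W l u k r j)) \<le> (\<Sum>r<n k. Lam k r * phi k r)" by (simp add: sw)
  qed
  have tel: "(\<Sum>r<n k. Lam k r * phi k r) \<le> (\<Sum>i<n 0. Lam 0 i * x i)
      + (\<Sum>k'\<in>{1..k}. \<Sum>r<n k'. A k' j r * (b k' r - Tmat m n W l u k' r j))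
    \<and> (\<Sum>i<n 0. Lam 0 i * x i)
      + (\<Sum>k'\<in>{1..k}. \<Sum>r<n k'. A k' j r * (b k' r - Hmat m n W l u k' r j)) \<le> (\<Sum>r<n k. Lam k r * phi k r)"
    if "k \<le> m - 1" for k
    using that
  proof (induction k)
    case 0 then show ?case by (simp add: phi_def)
  next
    case (Suc k)
    have k: "Suc k \<in> {1..m-1}" using Suc.prems by auto
    show ?case using Suc.IH Suc.prems layerU[OF k] layerL[OF k] by (simp add: sum.cl_ivl_Suc)
  qed
  have tm: "m - 1 \<le> m - 1" by simp
  have net: "net m n W b x j = (\<Sum>r<n (m-1). Lam (m-1) r * phi (m-1) r) + b m j"
    by (simp add: net_def preact_def Lam_def phi_def)
  have L0: "Lam 0 i = A 0 j i" for i using AL[of 0 i] by (simp add: Ddiag_def)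
  define pn where "pn = pnorm (n 0) (dual_exp p) (A 0 j)"
  have hold: "\<bar>\<Sum>i<n 0. A 0 j i * (x i - x0 i)\<bar> \<le> \<epsilon> * pn"
  proof -
    have "\<bar>\<Sum>i<n 0. A 0 j i * (x i - x0 i)\<bar> \<le> (\<Sum>i<n 0. \<bar>A 0 j i\<bar> * \<bar>x i - x0 i\<bar>)"
      by (rule order_trans[OF sum_abs]) (simp add: abs_mult)
    also have "\<dots> \<le> pn * pnorm (n 0) p (\<lambda>i. x i - x0 i)"
      unfolding pn_def using holder_pnorm[OF p, where d="n 0" and a="A 0 j" and z="\<lambda>i. x i - x0 i"] by simp
    also have "\<dots> \<le> pn * \<epsilon>" using xb by (intro mult_left_mono) (auto simp: pn_def pnorm_nonneg)
    finally show ?thesis by (simp add: mult.commute)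
  qed
  have split0: "(\<Sum>i<n 0. Lam 0 i * x i) = (\<Sum>i<n 0. A 0 j i * x0 i) + (\<Sum>i<n 0. A 0 j i * (x i - x0 i))"
    by (simp add: L0 algebra_simps sum.distrib sum_subtractf)
  have ST: "(\<Sum>k'\<in>{1..m-1}. \<Sum>r<n k'. A k' j r * (b k' r - Z k' r)) =
     (\<Sum>k'\<in>{1..m-1}. \<Sum>r<n k'. A k' j r * b k' r) - (\<Sum>k'\<in>{1..m-1}. \<Sum>r<n k'. A k' j r * Z k' r)" for Z
    by (simp add: right_diff_distrib sum_subtractf)
  show "let A = Amat m n W l u;
          q = dual_exp p;
          muP = - (\<Sum>k\<in>{1..m-1}. \<Sum>r<n k. A k j r * Tmat m n W l u k r j);
          muM = - (\<Sum>k\<in>{1..m-1}. \<Sum>r<n k. A k j r * Hmat m n W l u k r j);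
          nu = (\<Sum>i<n 0. A 0 j i * x0 i) + b m j
               + (\<Sum>k\<in>{1..m-1}. \<Sum>r<n k. A k j r * b k r);
          gL = muM + nu - \<epsilon> * pnorm (n 0) q (A 0 j);
          gU = muP + nu + \<epsilon> * pnorm (n 0) q (A 0 j)
      in gL \<le> net m n W b x j \<and> net m n W b x j \<le> gU"
    unfolding Let_def A_def[symmetric] pn_def[symmetric]
    using tel[OF tm] net split0 hold ST[of "\<lambda>k r. Tmat m n W l u k r j"] ST[of "\<lambda>k r. Hmat m n W l u k r j"]
    by (simp add: abs_le_iff)
qed

end
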